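(* Let $X:=\{x_i\}_{i\in[n]}$ be points in $\mathbb{R}^d$, identified with the $d\times n$ matrix with columns $x_i$, let $k\ge1$, and let $P\in\mathbb{R}^{d\times d}$ be any orthogonal projection matrix. Then \[\min_{Z\in\mathcal{Z}(n,k)}\frac12\operatorname{tr}(D_XZ)\ge \|PX\|_F^2-k\|PX\|_{2\to2}^2.\]
   Context: $D_X\in\mathbb{R}^{n\times n}$ has entries $(D_X)_{ij}=\|x_i-x_j\|^2$. $\mathcal{Z}(n,k):=\{Z\in\mathbb{R}^{n\times n}: Z\mathbf 1=\mathbf 1,\ \operatorname{tr}Z=k,\ Z\ge0\text{ entrywise},\ Z\succeq0\}$. *)

theory Defs
  imports "HOL-Analysis.Analysis"
begin

definition dist_matrix :: "real^'n^'d \<Rightarrow> real^'n^'n" where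
  "dist_matrix X = (\<chi> i j. (norm (column i X - column j X))\<^sup>2)"

definition psd :: "real^'n^'n \<Rightarrow> bool" where
  "psd Z \<longleftrightarrow> transpose Z = Z \<and> (\<forall>v. 0 \<le> v \<bullet> (Z *v v))"

definition Zset :: "real \<Rightarrow> (real^'n^'n) set" where
  "Zset k = {Z. Z *v (\<chi> i. 1) = (\<chi> i. 1) \<and> trace Z = k \<and>
                (\<forall>i j. 0 \<le> Z $ i $ j) \<and> psd Z}"

definition orth_proj :: "real^'d^'d \<Rightarrow> bool" where
  "orth_proj P \<longleftrightarrow> transpose P = P \<and> P ** P = P"

definition frob_norm_sq :: "real^'n^'m \<Rightarrow> real" where
  "frob_norm_sq A = (\<Sum>i\<in>UNIV. \<Sum>j\<in>UNIV. (A $ i $ j)\<^sup>2)"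

definition op_norm :: "real^'n^'m \<Rightarrow> real" where
  "op_norm A = onorm (\<lambda>v. A *v v)"

end

theory Submission
  imports Defs
begin

definition Qf :: "real^'n^'n \<Rightarrow> real^'n \<Rightarrow> real" where
  "Qf Z v = (\<Sum>i\<in>UNIV. \<Sum>j\<in>UNIV. v$i * Z$i$j * v$j)"

lemma Qf_inner: "v \<bullet> (Z *v v) = Qf Z v"
  by (simp add: Qf_def inner_vec_def matrix_vector_mult_def sum_distrib_left mult.assoc mult.left_commute)

lemma sum_if_P: "(\<Sum>j\<in>S. if P then f j else 0) = (if P then sum f S else 0)"
  by simp

lemma if_mult1: "(if P then (1::real) else 0) * x = (if P then x else 0)" by simp
lemma if_mult2: "x * (if P then (1::real) else 0) = (if P then x else 0)" by simp
lemma if_mult4: "(x::real) * (if P then y else 0) = (if P then x * y else 0)" by simp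
lemma if_mult3: "(if P then (x::real) else 0) * y = (if P then x * y else 0)" by simp

lemma Qf_shift:
  "Qf Z (v + c *\<^sub>R axis a 1) = Qf Z v + c * (\<Sum>j\<in>UNIV. Z$a$j * v$j) + c * (\<Sum>i\<in>UNIV. v$i * Z$i$a) + c\<^sup>2 * Z$a$a"
proof -
  have "Qf Z (v + c *\<^sub>R axis a 1) = (\<Sum>i\<in>UNIV. \<Sum>j\<in>UNIV. v$i * Z$i$j * v$j)
     + (\<Sum>i\<in>UNIV. \<Sum>j\<in>UNIV. v$i * Z$i$j * (c * (if j = a then 1 else 0)))
     + (\<Sum>i\<in>UNIV. \<Sum>j\<in>UNIV. (c * (if i = a then 1 else 0)) * Z$i$j * v$j)
     + (\<Sum>i\<in>UNIV. \<Sum>j\<in>UNIV. (c * (if i = a then 1 else 0)) * Z$i$j * (c * (if j = a then 1 else 0)))"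
    unfolding Qf_def by (simp add: axis_def algebra_simps sum.distrib)
  also have "\<dots> = Qf Z v + c * (\<Sum>j\<in>UNIV. Z$a$j * v$j) + c * (\<Sum>i\<in>UNIV. v$i * Z$i$a) + c\<^sup>2 * Z$a$a"
    by (simp add: Qf_def if_distrib[of "\<lambda>x. _ * x"] sum_distrib_left mult_ac power2_eq_square sum_if_P cong: if_cong)
  finally show ?thesis .
qed

lemma Qf_axis: "Qf Z (axis j 1) = Z$j$j"
  by (simp add: Qf_def axis_def if_mult1 if_mult2 if_mult3 sum_if_P cong: if_cong)

lemma orth_proj_norm:
  assumes "orth_proj P" shows "(norm (P *v v))\<^sup>2 \<le> (norm v)\<^sup>2"
proof -
  have PT: "transpose P = P" and PP: "P ** P = P" using assms by (auto simp: orth_proj_def)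
  have "(P *v v) \<bullet> (P *v v) = v \<bullet> ((transpose P ** P) *v v)"
    by (simp add: inner_vec_def matrix_vector_mult_def matrix_matrix_mult_def transpose_def
        sum_distrib_left sum_distrib_right mult_ac)
       (subst sum.swap, rule sum.cong, simp, subst sum.swap, simp)
  hence e: "(P *v v) \<bullet> (P *v v) = v \<bullet> (P *v v)" using PT PP by simp
  have "0 \<le> (v - P *v v) \<bullet> (v - P *v v)" by simp
  also have "\<dots> = v \<bullet> v - (P *v v) \<bullet> (P *v v)" using e by (simp add: inner_diff inner_commute)
  finally show ?thesis by (simp add: power2_norm_eq_inner)
qed

lemma sum_axis_r: "(\<Sum>l\<in>UNIV. f l * axis j (1::real) $ l) = f j"
  by (simp add: axis_def if_mult2 cong: if_cong)
lemma sum_axis_l: "(\<Sum>l\<in>UNIV. axis j (1::real) $ l * f l) = f j"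
  by (simp add: axis_def if_mult1 cong: if_cong)

lemma key:
  fixes Z W :: "real^'n^'n"
  assumes "finite I"
  shows "(\<forall>i j. Z$i$j = Z$j$i) \<Longrightarrow> (\<forall>v. 0 \<le> Qf Z v) \<Longrightarrow>
     (\<forall>i j. i \<notin> I \<or> j \<notin> I \<longrightarrow> Z$i$j = 0) \<Longrightarrow> (\<forall>v. 0 \<le> Qf W v) \<Longrightarrow>
     0 \<le> (\<Sum>i\<in>UNIV. \<Sum>j\<in>UNIV. Z$i$j * W$i$j)"
  using assms
proof (induction I arbitrary: Z rule: finite_induct)
  case empty
  then show ?case by simp
next
  case (insert a I Z)
  note sym = insert.prems(1) and psdZ = insert.prems(2) and supp = insert.prems(3)
    and psdW = insert.prems(4)
  have Zaa: "0 \<le> Z$a$a" using psdZ[rule_format, of "axis a 1"] by (simp add: Qf_axis)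
  show ?case
  proof (cases "Z$a$a = 0")
    case True
    have row: "Z$a$j = 0" for j
    proof (rule ccontr)
      assume ne: "Z$a$j \<noteq> 0"
      define t where "t = -(Z$j$j + 1)/(2*Z$a$j)"
      have "Qf Z (axis j 1 + t *\<^sub>R axis a 1) = Z$j$j + t * Z$a$j + t * Z$j$a"
        using True by (simp add: Qf_shift Qf_axis sum_axis_r sum_axis_l)
      also have "\<dots> = -1" using sym ne unfolding t_def by (simp add: field_simps)
      finally show False using psdZ by (metis neg_0_le_iff_le not_one_le_zero)
    qed
    have "\<forall>i j. i \<notin> I \<or> j \<notin> I \<longrightarrow> Z$i$j = 0"
      using supp row sym by (metis insert_iff)
    then show ?thesis using insert.IH sym psdZ psdW by blast
  next
    case False
    define d where "d = Z$a$a"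
    have dpos: "d > 0" using False Zaa d_def by simp
    define Z' :: "real^'n^'n" where "Z' = (\<chi> i j. Z$i$j - Z$i$a * Z$j$a / d)"
    have sym': "\<forall>i j. Z'$i$j = Z'$j$i" using sym by (simp add: Z'_def mult.commute)
    have supp': "\<forall>i j. i \<notin> I \<or> j \<notin> I \<longrightarrow> Z'$i$j = 0"
    proof (intro allI impI)
      fix i j assume h: "i \<notin> I \<or> j \<notin> I"
      show "Z'$i$j = 0"
      proof (cases "i = a \<or> j = a")
        case True
        then show ?thesis using dpos sym unfolding Z'_def d_def by auto
      next
        case False
        then have "Z$i$j = 0" "Z$i$a = 0 \<or> Z$j$a = 0" using h supp by auto
        then show ?thesis unfolding Z'_def by auto
      qed
    qed
    have psd': "\<forall>v. 0 \<le> Qf Z' v"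
    proof
      fix v :: "real^'n"
      define s where "s = (\<Sum>i\<in>UNIV. v$i * Z$i$a)"
      have s2: "(\<Sum>j\<in>UNIV. Z$a$j * v$j) = s" unfolding s_def using sym
        by (simp add: mult.commute)
      have "Qf Z' v = Qf Z v - (\<Sum>i\<in>UNIV. \<Sum>j\<in>UNIV. (v$i * Z$i$a) * (Z$j$a * v$j) / d)"
        unfolding Qf_def Z'_def by (simp add: algebra_simps sum_subtractf sum_divide_distrib)
      also have "\<dots> = Qf Z v - s * s / d"
        unfolding s_def using sym
        by (simp add: sum_divide_distrib[symmetric] sum_product mult.commute)
      also have "\<dots> = Qf Z (v + (- s / d) *\<^sub>R axis a 1)"
        using dpos s2 unfolding Qf_shift s_def[symmetric] d_def[symmetric]
        by (simp add: field_simps power2_eq_square)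
      finally show "0 \<le> Qf Z' v" using psdZ by simp
    qed
    have ih: "0 \<le> (\<Sum>i\<in>UNIV. \<Sum>j\<in>UNIV. Z'$i$j * W$i$j)"
      using insert.IH sym' psd' supp' psdW by blast
    define z :: "real^'n" where "z = (\<chi> i. Z$i$a)"
    have "(\<Sum>i\<in>UNIV. \<Sum>j\<in>UNIV. Z$i$j * W$i$j) =
          (\<Sum>i\<in>UNIV. \<Sum>j\<in>UNIV. Z'$i$j * W$i$j) + Qf W z / d"
      unfolding Z'_def Qf_def z_def
      by (simp add: algebra_simps sum_subtractf sum_divide_distrib sum.distrib)
    moreover have "0 \<le> Qf W z / d" using psdW dpos by simp
    ultimately show ?thesis using ih by linarith
  qed
qed

lemma gram_Qf:
  fixes Y :: "real^'n^'d"
  shows "(Y *v v) \<bullet> (Y *v v) = (\<Sum>i\<in>UNIV. \<Sum>j\<in>UNIV. v$i * (column i Y \<bullet> column j Y) * v$j)"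
  unfolding matrix_mult_sum scalar_mult_eq_scaleR
  by (simp add: inner_sum_left inner_sum_right sum_distrib_left mult_ac inner_commute)

theorem lemma18:
  fixes X :: "real^'n^'d" and P :: "real^'d^'d" and k :: nat
  assumes "k \<ge> 1" and "orth_proj P"
  shows "\<forall>Z \<in> Zset (real k).
           (1/2) * trace (dist_matrix X ** Z) \<ge>
             frob_norm_sq (P ** X) - real k * (op_norm (P ** X))\<^sup>2"
proof
  fix Z :: "real^'n^'n"
  assume "Z \<in> Zset (real k)"
  then have Z1: "Z *v (\<chi> i. 1) = (\<chi> i. 1)" and trZ: "trace Z = real k"
    and Znn: "\<forall>i j. 0 \<le> Z $ i $ j" and psdZ: "psd Z" by (auto simp: Zset_def)
  have sym: "\<forall>i j. Z$i$j = Z$j$i" using psdZ unfolding psd_def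
    by (metis transpose_def vec_lambda_beta)
  have rows: "(\<Sum>j\<in>UNIV. Z$i$j) = 1" for i
    using arg_cong[OF Z1, of "\<lambda>x. x $ i"] by (simp add: matrix_vector_mult_def)
  have cols: "(\<Sum>j\<in>UNIV. Z$j$i) = 1" for i using rows[of i] sym by simp
  define Y where "Y = P ** X"
  define y where "y i = column i Y" for i
  define lam where "lam = (op_norm Y)\<^sup>2"
  have ycol: "y i = P *v column i X" for i
    unfolding y_def Y_def
    by (simp add: vec_eq_iff column_def matrix_matrix_mult_def matrix_vector_mult_def)
  have Dge: "(dist_matrix X)$i$j \<ge> (norm (y i - y j))\<^sup>2" for i j
  proof -
    have "y i - y j = P *v (column i X - column j X)"
      by (simp add: ycol matrix_vector_mult_diff_distrib)
    then show ?thesis using orth_proj_norm[OF assms(2), of "column i X - column j X"]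
      by (simp add: dist_matrix_def)
  qed
  have tr: "trace (dist_matrix X ** Z) = (\<Sum>i\<in>UNIV. \<Sum>j\<in>UNIV. (dist_matrix X)$i$j * Z$j$i)"
    by (simp add: trace_def matrix_matrix_mult_def)
  have step1: "trace (dist_matrix X ** Z) \<ge> (\<Sum>i\<in>UNIV. \<Sum>j\<in>UNIV. (norm (y i - y j))\<^sup>2 * Z$j$i)"
    unfolding tr by (intro sum_mono mult_right_mono Dge) (use Znn in auto)
  have exp: "(norm (y i - y j))\<^sup>2 = y i \<bullet> y i + y j \<bullet> y j - 2 * (y i \<bullet> y j)" for i j
    by (simp add: power2_norm_eq_inner inner_diff inner_commute)
  have A: "(\<Sum>i\<in>UNIV. \<Sum>j\<in>UNIV. (y i \<bullet> y i) * Z$j$i) = (\<Sum>i\<in>UNIV. y i \<bullet> y i)"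
    by (simp add: sum_distrib_left[symmetric] cols)
  have B: "(\<Sum>i\<in>UNIV. \<Sum>j\<in>UNIV. (y j \<bullet> y j) * Z$j$i) = (\<Sum>i\<in>UNIV. y i \<bullet> y i)"
    by (subst sum.swap) (simp add: sum_distrib_left[symmetric] rows)
  define G where "G = (\<Sum>i\<in>UNIV. \<Sum>j\<in>UNIV. Z$i$j * (y i \<bullet> y j))"
  have C: "(\<Sum>i\<in>UNIV. \<Sum>j\<in>UNIV. (y i \<bullet> y j) * Z$j$i) = G"
    unfolding G_def using sym by (simp add: mult.commute)
  have step2: "(\<Sum>i\<in>UNIV. \<Sum>j\<in>UNIV. (norm (y i - y j))\<^sup>2 * Z$j$i) = 2 * (\<Sum>i\<in>UNIV. y i \<bullet> y i) - 2 * G"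
    unfolding exp using A B C
    by (simp add: algebra_simps sum.distrib sum_subtractf sum_distrib_left[symmetric])
  have frob: "(\<Sum>i\<in>UNIV. y i \<bullet> y i) = frob_norm_sq (P ** X)"
    unfolding frob_norm_sq_def y_def Y_def[symmetric]
    by (subst sum.swap) (simp add: inner_vec_def column_def power2_eq_square)
  define W :: "real^'n^'n" where "W = (\<chi> i j. (if i = j then lam else 0) - y i \<bullet> y j)"
  have psdW: "\<forall>v. 0 \<le> Qf W v"
  proof
    fix v :: "real^'n"
    have "Qf W v = lam * (v \<bullet> v) - (Y *v v) \<bullet> (Y *v v)"
      unfolding Qf_def W_def gram_Qf y_def
      by (simp add: algebra_simps sum_subtractf inner_vec_def sum_distrib_left if_mult4 cong: if_cong)
    moreover have "norm (Y *v v) \<le> op_norm Y * norm v"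
      unfolding op_norm_def by (rule onorm) simp
    moreover have "0 \<le> op_norm Y" unfolding op_norm_def by (rule onorm_pos_le) simp
    ultimately show "0 \<le> Qf W v"
      unfolding lam_def
      by (simp add: power2_norm_eq_inner[symmetric] power_mult_distrib[symmetric]
          power_mono)
  qed
  have "0 \<le> (\<Sum>i\<in>UNIV. \<Sum>j\<in>UNIV. Z$i$j * W$i$j)"
    by (rule key[of UNIV]) (use sym psdZ psdW in \<open>auto simp: Qf_inner[symmetric] psd_def\<close>)
  also have "\<dots> = lam * trace Z - G"
    unfolding W_def G_def trace_def
    by (simp add: algebra_simps sum_subtractf sum_distrib_left if_mult4 cong: if_cong)
  finally have "G \<le> real k * lam" using trZ by (simp add: mult.commute)
  then show "(1/2) * trace (dist_matrix X ** Z) \<ge>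
             frob_norm_sq (P ** X) - real k * (op_norm (P ** X))\<^sup>2"
    using step1 step2 frob unfolding lam_def Y_def by linarith
qed

end
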